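(* Consider the online energy harvesting two-hop status update system described in the context, with service times $d>0$ and $\bar d>0$. The optimal long term average age satisfies $$\rho\ \ge\ \max\left\{\tfrac12+d+\bar d,\ \tfrac32(d+\bar d)\right\}.$$
   Context: A source sends status updates to a destination through a half-duplex relay. Energy arrives at the source and at the relay according to two independent Poisson processes of unit rate. Each node has an infinite battery, and at time $0$ each battery holds exactly one energy packet. Transmitting one update consumes one energy packet at the transmitting node, and a node may transmit only if its battery holds at least one packet just before the transmission time (energy causality). An update transmitted by the source at time $t_i$ is generated at time $t_i$ and reaches the relay at time $t_i+d$. The relay forwards it at a time $\bar t_i\ge t_i+d$ (data causality), and it reaches the destination at time $\bar t_i+\bar d$. The source may transmit the next update only at a time $t_{i+1}\ge \bar t_i+\bar d$. Transmission decisions are made online by a central controller which, at each time, knows the energy arrivals at both nodes up to that time but not future arrivals. The age of information is $a(t)=t-u(t)$, where $u(t)$ is the generation time of the latest update received at the destination before time $t$, with $a(0)=0$. Let $A_T=\int_0^T a(t)\,dt$, and let $\rho$ be the minimum, over all such feasible online policies, of $\limsup_{T\to\infty}\frac1T\mathbb{E}[A_T]$. *)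

theory Defs
  imports "HOL-Probability.Probability"
begin

text \<open>Sample space: a pair of sequences of i.i.d. Exp(1) inter-arrival times,
  the first for the source, the second for the relay.\<close>

definition Exp1 :: "real measure" where
  "Exp1 = density lborel (\<lambda>x. ennreal (exponential_density 1 x))"

definition EH_space :: "((nat \<Rightarrow> real) \<times> (nat \<Rightarrow> real)) measure" where
  "EH_space = (\<Pi>\<^sub>M i\<in>UNIV. Exp1) \<Otimes>\<^sub>M (\<Pi>\<^sub>M i\<in>UNIV. Exp1)"

definition arrival :: "(nat \<Rightarrow> real) \<Rightarrow> nat \<Rightarrow> real" where
  "arrival x k = (\<Sum>j<k. x j)"

text \<open>Number of energy arrivals strictly before time s (the initial packet is not counted).\<close>

definition arrivals_before :: "(nat \<Rightarrow> real) \<Rightarrow> real \<Rightarrow> nat" where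
  "arrivals_before x s = card {k. 1 \<le> k \<and> arrival x k < s}"

definition EH_filtr :: "real \<Rightarrow> ((nat \<Rightarrow> real) \<times> (nat \<Rightarrow> real)) measure" where
  "EH_filtr s = sigma (space EH_space)
     ({{\<omega> \<in> space EH_space. arrival (fst \<omega>) k \<le> r} | k r. 1 \<le> k \<and> r \<le> s} \<union>
      {{\<omega> \<in> space EH_space. arrival (snd \<omega>) k \<le> r} | k r. 1 \<le> k \<and> r \<le> s})"

text \<open>Feasible online policies: t i = transmission time of the i-th update (i = 0,1,...)
  at the source, tb i = its forwarding time at the relay.\<close>

definition feasible_policy ::
  "real \<Rightarrow> real \<Rightarrow> (nat \<Rightarrow> (nat \<Rightarrow> real) \<times> (nat \<Rightarrow> real) \<Rightarrow> real)
        \<Rightarrow> (nat \<Rightarrow> (nat \<Rightarrow> real) \<times> (nat \<Rightarrow> real) \<Rightarrow> real) \<Rightarrow> bool" where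
  "feasible_policy d db t tb \<longleftrightarrow>
     (\<forall>i. stopping_time EH_filtr (t i) \<and> stopping_time EH_filtr (tb i)) \<and>
     (AE \<omega> in EH_space.
        0 \<le> t 0 \<omega> \<and>
        (\<forall>i. t i \<omega> + d \<le> tb i \<omega>) \<and>
        (\<forall>i. tb i \<omega> + db \<le> t (Suc i) \<omega>) \<and>
        (\<forall>i. i \<le> arrivals_before (fst \<omega>) (t i \<omega>)) \<and>
        (\<forall>i. i \<le> arrivals_before (snd \<omega>) (tb i \<omega>)))"

text \<open>Generation time of the latest update received at the destination before time s
  (0 if none, so that the age at time 0 is 0), and the age.\<close>

definition latest_gen ::
  "real \<Rightarrow> (nat \<Rightarrow> real) \<Rightarrow> (nat \<Rightarrow> real) \<Rightarrow> real \<Rightarrow> real" where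
  "latest_gen db t tb s = Sup (insert 0 {t i | i. tb i + db < s})"

definition age :: "real \<Rightarrow> (nat \<Rightarrow> real) \<Rightarrow> (nat \<Rightarrow> real) \<Rightarrow> real \<Rightarrow> real" where
  "age db t tb s = s - latest_gen db t tb s"

definition expected_area ::
  "real \<Rightarrow> (nat \<Rightarrow> (nat \<Rightarrow> real) \<times> (nat \<Rightarrow> real) \<Rightarrow> real)
        \<Rightarrow> (nat \<Rightarrow> (nat \<Rightarrow> real) \<times> (nat \<Rightarrow> real) \<Rightarrow> real) \<Rightarrow> real \<Rightarrow> ennreal" where
  "expected_area db t tb T =
     (\<integral>\<^sup>+ \<omega>. (\<integral>\<^sup>+ s\<in>{0..T}. ennreal (age db (\<lambda>i. t i \<omega>) (\<lambda>i. tb i \<omega>) s) \<partial>lborel) \<partial>EH_space)"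

definition avg_age ::
  "real \<Rightarrow> (nat \<Rightarrow> (nat \<Rightarrow> real) \<times> (nat \<Rightarrow> real) \<Rightarrow> real)
        \<Rightarrow> (nat \<Rightarrow> (nat \<Rightarrow> real) \<times> (nat \<Rightarrow> real) \<Rightarrow> real) \<Rightarrow> ennreal" where
  "avg_age db t tb = Limsup at_top (\<lambda>T. ennreal (1 / T) * expected_area db t tb T)"

definition opt_age :: "real \<Rightarrow> real \<Rightarrow> ennreal" where
  "opt_age d db = (INF (t, tb) \<in> {(t, tb). feasible_policy d db t tb}. avg_age db t tb)"

end

theory Submission
  imports Defs
begin

locale detpol =
  fixes t D :: "nat \<Rightarrow> real" and c :: real
  assumes c_pos: "0 < c" and t0: "0 \<le> t 0"
    and tD: "\<And>i. t i + c \<le> D i" and Dt: "\<And>i. D i \<le> t (Suc i)"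
begin

definition L :: "real \<Rightarrow> real" where
  "L s = Sup (insert 0 {t i | i. D i < s})"

lemma D_step: "D i + c \<le> D (Suc i)"
  using tD[of "Suc i"] Dt[of i] by linarith

lemma D_lower: "c * (real i + 1) \<le> D i"
proof (induction i)
  case 0 then show ?case using tD[of 0] t0 by simp
next
  case (Suc i) then show ?case using D_step[of i] by (simp add: algebra_simps)
qed

lemma D_smono: "strict_mono D"
proof (rule strict_mono_Suc_iff[THEN iffD2], rule allI)
  fix j show "D j < D (Suc j)" using D_step[of j] c_pos by linarith
qed

lemma D_strict: "i < j \<Longrightarrow> D i < D j"
  using D_smono by (rule strict_monoD)

lemma D_less_iff: "D i < D j \<longleftrightarrow> i < j"
  using D_strict by (metis less_asym' linorder_neqE_nat)

lemma D_le_iff: "D i \<le> D j \<longleftrightarrow> i \<le> j"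
  by (meson D_less_iff not_le)

lemma t_mono': "mono t"
proof (rule mono_iff_le_Suc[THEN iffD2], rule allI)
  fix j show "t j \<le> t (Suc j)" using tD[of j] Dt[of j] c_pos by linarith
qed

lemma t_mono: "i \<le> j \<Longrightarrow> t i \<le> t j"
  using t_mono' by (rule monoD)

lemma t_nonneg: "0 \<le> t i"
  using t_mono[of 0 i] t0 by simp

lemma finite_del: "finite {i. D i < s}"
proof -
  have "{i. D i < s} \<subseteq> {..nat \<lceil>s / c\<rceil>}"
  proof
    fix i assume "i \<in> {i. D i < s}"
    then have "c * (real i + 1) < s" using D_lower[of i] by simp
    then have "real i < s / c" using c_pos by (simp add: field_simps)
    then have "real i \<le> real_of_int \<lceil>s / c\<rceil>" using le_of_int_ceiling[of "s/c"] by linarith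
    then have "int i \<le> \<lceil>s / c\<rceil>" by (metis of_int_le_iff of_int_of_nat_eq)
    then show "i \<in> {..nat \<lceil>s / c\<rceil>}" by (simp add: le_nat_iff)
  qed
  then show ?thesis by (rule finite_subset) simp
qed

lemma set_eq: "{t i | i. D i < s} = t ` {i. D i < s}" by auto

lemma L_zero: "s \<le> D 0 \<Longrightarrow> L s = 0"
proof -
  assume "s \<le> D 0"
  then have "\<forall>i. \<not> D i < s" using D_le_iff[of 0] by (meson le0 order_trans not_le)
  then have "{t i | i. D i < s} = {}" by auto
  then show ?thesis unfolding L_def by simp
qed

lemma L_eq: assumes "D j < s" "s \<le> D (Suc j)" shows "L s = t j"
proof -
  have "{i. D i < s} = {..j}"
  proof (safe)
    fix i assume "D i < s"
    then have "D i < D (Suc j)" using assms by simp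
    then show "i \<le> j" using D_less_iff by simp
  next
    fix i assume "i \<le> j" then show "D i < s" using assms D_le_iff[of i j] by simp
  qed
  then have "insert 0 {t i | i. D i < s} = insert 0 (t ` {..j})" by (simp add: set_eq)
  moreover have "Sup (insert 0 (t ` {..j})) = t j"
  proof (rule cSup_eq_maximum)
    show "t j \<in> insert 0 (t ` {..j})" by simp
    show "\<And>x. x \<in> insert 0 (t ` {..j}) \<Longrightarrow> x \<le> t j" using t_mono t_nonneg by auto
  qed
  ultimately show ?thesis unfolding L_def by simp
qed

lemma bracket: assumes "D 0 < s" shows "\<exists>j. D j < s \<and> s \<le> D (Suc j)"
proof -
  obtain n where n: "s \<le> D n"
  proof -
    obtain n :: nat where "s / c \<le> real n" using real_arch_simple by blast
    then have "s \<le> c * (real n + 1)" using c_pos by (simp add: field_simps)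
    then show ?thesis using that[of n] D_lower[of n] by linarith
  qed
  define m where "m = (LEAST m. s \<le> D m)"
  have m1: "s \<le> D m" unfolding m_def by (rule LeastI[of _ n]) (rule n)
  have m0: "m \<noteq> 0" using m1 assms by (cases m) auto
  then obtain j where j: "m = Suc j" using not0_implies_Suc by blast
  have "\<not> s \<le> D j" using not_less_Least[of j "\<lambda>m. s \<le> D m"] j unfolding m_def by simp
  then show ?thesis using m1 j by (intro exI[of _ j]) auto
qed

lemma L_mono: "mono L"
proof (rule monoI)
  fix x y :: real assume "x \<le> y"
  show "L x \<le> L y" unfolding L_def
  proof (rule cSup_subset_mono)
    show "insert 0 {t i |i. D i < x} \<noteq> {}" by simp
    show "bdd_above (insert 0 {t i |i. D i < y})"
      using finite_del[of y] by (simp add: set_eq)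
    show "insert 0 {t i |i. D i < x} \<subseteq> insert 0 {t i |i. D i < y}"
      using \<open>x \<le> y\<close> by auto
  qed
qed

lemma age_first: "s \<le> D 0 \<Longrightarrow> s - L s = s"
  using L_zero by simp

lemma age_piece: assumes "D k \<le> s" "s \<le> D (Suc k)" shows "c + (s - D k) \<le> s - L s"
proof (cases "s \<le> D 0")
  case True
  have "c * 1 \<le> c * (real k + 1)" using c_pos by (intro mult_left_mono) auto
  then show ?thesis using L_zero[OF True] D_lower[of k] by simp
next
  case False
  then obtain j where j: "D j < s" "s \<le> D (Suc j)" using bracket by force
  then have "D j < D (Suc k)" using assms by simp
  then have "j \<le> k" using D_less_iff by simp
  then have "D j \<le> D k" using D_le_iff by simp
  then show ?thesis using L_eq[OF j] tD[of j] by simp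
qed

end

lemma ennreal_add_le: "0 \<le> y \<Longrightarrow> ennreal (x + y) \<le> ennreal x + ennreal y"
proof (cases "0 \<le> x")
  case True assume "0 \<le> y" then show ?thesis using True by (simp add: ennreal_plus)
next
  case False assume "0 \<le> y"
  then have "ennreal (x + y) \<le> ennreal y" using False by (intro ennreal_leI) simp
  then show ?thesis using False by (simp add: ennreal_neg)
qed

lemma cs_ineq: fixes D x :: real assumes "0 < n"
  shows "(D + x)^2 / (n + 1) \<le> D^2 / n + x^2"
proof -
  have "n * (D + x)^2 \<le> (n + 1) * (D^2 + n * x^2)"
  proof -
    have "0 \<le> (D - n * x)^2" by simp
    then show ?thesis by (simp add: power2_eq_square algebra_simps)
  qed
  then have "(D + x)^2 / (n + 1) \<le> (D^2 + n * x^2) / n"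
    using assms by (simp add: field_simps)
  also have "\<dots> = D^2 / n + x^2" using assms by (simp add: field_simps)
  finally show ?thesis .
qed

context detpol begin

definition Ia :: "real \<Rightarrow> ennreal" where
  "Ia T = (\<integral>\<^sup>+ s\<in>{0..T}. ennreal (s - L s) \<partial>lborel)"

lemma age_meas[measurable]: "(\<lambda>s. s - L s) \<in> borel_measurable lborel"
proof -
  have "L \<in> borel_measurable borel" by (rule borel_measurable_mono[OF L_mono])
  then have "L \<in> borel_measurable lborel" by simp
  then show ?thesis by measurable
qed

lemma Ia_split: assumes "0 \<le> p" "p \<le> T"
  shows "Ia T = Ia p + (\<integral>\<^sup>+ s\<in>{p..T}. ennreal (s - L s) \<partial>lborel)"
proof -
  have "Ia T = (\<integral>\<^sup>+ s. ennreal (s - L s) * indicator {0..<p} s + ennreal (s - L s) * indicator {p..T} s \<partial>lborel)"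
    unfolding Ia_def
    by (intro nn_integral_cong) (use assms in \<open>auto simp: indicator_def\<close>)
  also have "\<dots> = (\<integral>\<^sup>+ s. ennreal (s - L s) * indicator {0..<p} s \<partial>lborel) + (\<integral>\<^sup>+ s\<in>{p..T}. ennreal (s - L s) \<partial>lborel)"
    by (rule nn_integral_add) measurable
  also have "(\<integral>\<^sup>+ s. ennreal (s - L s) * indicator {0..<p} s \<partial>lborel) = Ia p"
    unfolding Ia_def
    by (intro nn_integral_cong_AE eventually_mono[OF AE_lborel_singleton[of p]]) (auto simp: indicator_def)
  finally show ?thesis .
qed

lemma piece: assumes "a \<le> b" "0 \<le> \<alpha>" "\<And>s. a \<le> s \<Longrightarrow> s \<le> b \<Longrightarrow> \<alpha> + (s - a) \<le> s - L s"
  shows "ennreal (\<alpha> * (b - a) + (b - a)^2 / 2) \<le> (\<integral>\<^sup>+ s\<in>{a..b}. ennreal (s - L s) \<partial>lborel)"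
proof -
  have "(\<integral>\<^sup>+ s. ennreal (\<alpha> + (s - a)) * indicator {a..b} s \<partial>lborel)
     = ennreal ((\<alpha> * b + (b - a)^2 / 2) - (\<alpha> * a + (a - a)^2/2))"
  proof (rule nn_integral_FTC_Icc)
    show "(\<lambda>s. \<alpha> + (s - a)) \<in> borel_measurable borel" by measurable
    fix x assume "x \<in> {a..b}"
    then show "0 \<le> \<alpha> + (x - a)" using assms by auto
    show "((\<lambda>x. \<alpha> * x + (x - a)^2 / 2) has_real_derivative \<alpha> + (x - a)) (at x)"
      by (auto intro!: derivative_eq_intros simp: field_simps)
  qed (use assms in auto)
  also have "(\<alpha> * b + (b - a)^2 / 2) - (\<alpha> * a + (a - a)^2/2) = \<alpha> * (b - a) + (b - a)^2 / 2"
    by (simp add: algebra_simps)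
  finally have eq: "(\<integral>\<^sup>+ s. ennreal (\<alpha> + (s - a)) * indicator {a..b} s \<partial>lborel) = ennreal (\<alpha> * (b - a) + (b - a)^2 / 2)" .
  have "(\<integral>\<^sup>+ s. ennreal (\<alpha> + (s - a)) * indicator {a..b} s \<partial>lborel) \<le> (\<integral>\<^sup>+ s\<in>{a..b}. ennreal (s - L s) \<partial>lborel)"
    by (intro nn_integral_mono) (auto simp: indicator_def intro!: ennreal_leI assms(3))
  with eq show ?thesis by simp
qed

lemma D_nonneg: "0 \<le> D k"
proof -
  have "0 \<le> c * (real k + 1)" using c_pos by simp
  then show ?thesis using D_lower[of k] by linarith
qed

lemma Ia_first: assumes "0 \<le> T" "T \<le> D 0" shows "ennreal (T^2 / 2) \<le> Ia T"
  using piece[of 0 T 0] assms age_first unfolding Ia_def by simp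

lemma Ia_step: assumes "D k \<le> T" "T \<le> D (Suc k)"
  shows "Ia (D k) + ennreal (c * (T - D k) + (T - D k)^2 / 2) \<le> Ia T"
proof -
  have "Ia T = Ia (D k) + (\<integral>\<^sup>+ s\<in>{D k..T}. ennreal (s - L s) \<partial>lborel)"
    by (rule Ia_split) (use assms D_nonneg[of k] in auto)
  moreover have "ennreal (c * (T - D k) + (T - D k)^2 / 2) \<le> (\<integral>\<^sup>+ s\<in>{D k..T}. ennreal (s - L s) \<partial>lborel)"
  proof (rule piece)
    show "D k \<le> T" "0 \<le> c" using assms c_pos by auto
    fix s assume "D k \<le> s" "s \<le> T"
    then show "c + (s - D k) \<le> s - L s" using age_piece[of k s] assms by simp
  qed
  ultimately show ?thesis by (simp add: add_left_mono)
qed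

lemma boundA_D: "ennreal (3/2 * c * D k - 9/8 * c^2) \<le> Ia (D k)"
proof (induction k)
  case 0
  have "3/2 * c * D 0 - 9/8 * c^2 \<le> (D 0)^2 / 2"
  proof -
    have "0 \<le> (D 0 - 3/2 * c)^2" by simp
    then show ?thesis by (simp add: power2_eq_square algebra_simps)
  qed
  then have "ennreal (3/2 * c * D 0 - 9/8 * c^2) \<le> ennreal ((D 0)^2 / 2)" by (rule ennreal_leI)
  also have "\<dots> \<le> Ia (D 0)" using Ia_first[OF D_nonneg order_refl] .
  finally show ?case .
next
  case (Suc k)
  let ?x = "D (Suc k) - D k"
  have x: "c \<le> ?x" using D_step[of k] by simp
  have "3/2 * c * D (Suc k) - 9/8 * c^2 = (3/2 * c * D k - 9/8 * c^2) + 3/2 * c * ?x" by (simp add: field_simps)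
  also have "3/2 * c * ?x \<le> c * ?x + ?x^2 / 2"
  proof -
    have "c * ?x \<le> ?x * ?x" using x c_pos by (intro mult_right_mono) auto
    then show ?thesis by (simp add: power2_eq_square)
  qed
  finally have "ennreal (3/2 * c * D (Suc k) - 9/8 * c^2) \<le> ennreal ((3/2 * c * D k - 9/8 * c^2) + (c * ?x + ?x^2 / 2))"
    by (intro ennreal_leI) simp
  also have "\<dots> \<le> ennreal (3/2 * c * D k - 9/8 * c^2) + ennreal (c * ?x + ?x^2 / 2)"
    using x c_pos by (intro ennreal_add_le) simp
  also have "\<dots> \<le> Ia (D k) + ennreal (c * ?x + ?x^2 / 2)" using Suc by (simp add: add_right_mono)
  also have "\<dots> \<le> Ia (D (Suc k))" using Ia_step[of k "D (Suc k)"] D_strict[of k "Suc k"] by simp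
  finally show ?case .
qed

lemma boundA: assumes "0 \<le> T" shows "ennreal (3/2 * c * T - 5/4 * c^2) \<le> Ia T"
proof (cases "T \<le> D 0")
  case True
  have "3/2 * c * T - 5/4 * c^2 \<le> T^2 / 2"
  proof -
    have "0 \<le> (T - 3/2 * c)^2 + c^2/4" by simp
    then show ?thesis by (simp add: power2_eq_square algebra_simps)
  qed
  then have "ennreal (3/2 * c * T - 5/4 * c^2) \<le> ennreal (T^2 / 2)" by (rule ennreal_leI)
  also have "\<dots> \<le> Ia T" using Ia_first[OF assms True] .
  finally show ?thesis .
next
  case False
  then obtain j where j: "D j < T" "T \<le> D (Suc j)" using bracket by force
  let ?x = "T - D j"
  have "3/2 * c * T - 5/4 * c^2 \<le> (3/2 * c * D j - 9/8 * c^2) + (c * ?x + ?x^2 / 2)"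
  proof -
    have "(3/2*c*D j - 9/8*c^2) + (c*?x + ?x^2/2) - (3/2*c*T - 5/4*c^2) = (?x - c/2)^2/2"
      by (simp add: power2_eq_square field_simps)
    moreover have "0 \<le> (?x - c/2)^2/2" by simp
    ultimately show ?thesis by linarith
  qed
  then have "ennreal (3/2 * c * T - 5/4 * c^2) \<le> ennreal (3/2 * c * D j - 9/8 * c^2) + ennreal (c * ?x + ?x^2 / 2)"
    using j c_pos by (meson ennreal_add_le ennreal_leI order_trans add_nonneg_nonneg mult_nonneg_nonneg zero_le_power2 divide_nonneg_pos less_imp_le diff_ge_0_iff_ge zero_less_numeral)
  also have "\<dots> \<le> Ia (D j) + ennreal (c * ?x + ?x^2 / 2)" using boundA_D[of j] by (simp add: add_right_mono)
  also have "\<dots> \<le> Ia T" using Ia_step[of j T] j by simp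
  finally show ?thesis .
qed

end

lemma stepB: fixes Dv x e c K n :: real
  assumes "0 < n" "0 \<le> e" "e \<le> 1"
  shows "c * (Dv + x) - K + (1 - e) / 2 * ((Dv + x)^2 / (n + 1))
    \<le> (c * Dv - K + (1 - e) / 2 * (Dv^2 / n)) + (c * x + x^2 / 2)"
proof -
  have "(1 - e) / 2 * ((Dv + x)^2 / (n + 1)) \<le> (1 - e) / 2 * (Dv^2 / n + x^2)"
    using cs_ineq[OF assms(1)] assms by (intro mult_left_mono) auto
  also have "\<dots> = (1 - e) / 2 * (Dv^2 / n) + (1 - e) / 2 * x^2" by (simp add: algebra_simps)
  also have "(1 - e) / 2 * x^2 \<le> x^2 / 2"
  proof -
    have "(1 - e) * x^2 \<le> 1 * x^2" using assms by (intro mult_right_mono) auto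
    then show ?thesis by simp
  qed
  finally show ?thesis by (simp add: algebra_simps)
qed

context detpol begin

lemma boundB_D: assumes e: "0 < e" "e < 1"
  shows "ennreal (c * D k - c^2 / (2 * e) + (1 - e) / 2 * ((D k)^2 / (real k + 1))) \<le> Ia (D k)"
proof (induction k)
  case 0
  have "c * D 0 - c^2 / (2 * e) + (1 - e) / 2 * ((D 0)^2 / (real 0 + 1)) \<le> (D 0)^2 / 2"
  proof -
    have "(D 0)^2 / 2 - (c * D 0 - c^2 / (2 * e) + (1 - e) / 2 * ((D 0)^2 / (real 0 + 1))) = (e * D 0 - c)^2 / (2 * e)"
      using e by (simp add: power2_eq_square field_simps)
    moreover have "0 \<le> (e * D 0 - c)^2 / (2 * e)" using e by simp
    ultimately show ?thesis by linarith
  qed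
  then have "ennreal (c * D 0 - c^2 / (2 * e) + (1 - e) / 2 * ((D 0)^2 / (real 0 + 1))) \<le> ennreal ((D 0)^2 / 2)"
    by (rule ennreal_leI)
  also have "\<dots> \<le> Ia (D 0)" using Ia_first[OF D_nonneg order_refl] .
  finally show ?case .
next
  case (Suc k)
  let ?x = "D (Suc k) - D k"
  have x: "c \<le> ?x" using D_step[of k] by simp
  have "c * D (Suc k) - c^2 / (2 * e) + (1 - e) / 2 * ((D (Suc k))^2 / (real (Suc k) + 1))
     \<le> (c * D k - c^2 / (2 * e) + (1 - e) / 2 * ((D k)^2 / (real k + 1))) + (c * ?x + ?x^2 / 2)"
    using stepB[of "real k + 1" e c "D k" ?x "c^2 / (2 * e)"] e by (simp add: add_ac)
  then have "ennreal (c * D (Suc k) - c^2 / (2 * e) + (1 - e) / 2 * ((D (Suc k))^2 / (real (Suc k) + 1)))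
     \<le> ennreal (c * D k - c^2 / (2 * e) + (1 - e) / 2 * ((D k)^2 / (real k + 1))) + ennreal (c * ?x + ?x^2 / 2)"
    using x c_pos by (meson ennreal_add_le ennreal_leI order_trans add_nonneg_nonneg mult_nonneg_nonneg zero_le_power2 divide_nonneg_pos less_imp_le diff_ge_0_iff_ge zero_less_numeral)
  also have "\<dots> \<le> Ia (D k) + ennreal (c * ?x + ?x^2 / 2)" using Suc by (simp add: add_right_mono)
  also have "\<dots> \<le> Ia (D (Suc k))" using Ia_step[of k "D (Suc k)"] D_strict[of k "Suc k"] by simp
  finally show ?case .
qed

lemma boundB: assumes e: "0 < e" "e < 1" and T: "0 \<le> T" and n: "\<And>k. D k \<le> T \<Longrightarrow> k \<le> n"
  shows "ennreal (c * T - c^2 / (2 * e) + (1 - e) / 2 * (T^2 / (real n + 2))) \<le> Ia T"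
proof (cases "T \<le> D 0")
  case True
  have "c * T - c^2 / (2 * e) + (1 - e) / 2 * (T^2 / (real n + 2)) \<le> c * T - c^2 / (2 * e) + (1 - e) / 2 * (T^2 / 1)"
    using e by (intro add_left_mono mult_left_mono divide_left_mono) auto
  also have "\<dots> \<le> T^2 / 2"
  proof -
    have "T^2 / 2 - (c * T - c^2 / (2 * e) + (1 - e) / 2 * (T^2 / 1)) = (e * T - c)^2 / (2 * e)"
      using e by (simp add: power2_eq_square field_simps)
    moreover have "0 \<le> (e * T - c)^2 / (2 * e)" using e by simp
    ultimately show ?thesis by linarith
  qed
  finally have "ennreal (c * T - c^2 / (2 * e) + (1 - e) / 2 * (T^2 / (real n + 2))) \<le> ennreal (T^2 / 2)"
    by (rule ennreal_leI)
  also have "\<dots> \<le> Ia T" using Ia_first[OF T True] .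
  finally show ?thesis .
next
  case False
  then obtain j where j: "D j < T" "T \<le> D (Suc j)" using bracket by force
  have jn: "j \<le> n" using n j by simp
  let ?x = "T - D j"
  have "c * T - c^2 / (2 * e) + (1 - e) / 2 * (T^2 / (real n + 2))
      \<le> c * T - c^2 / (2 * e) + (1 - e) / 2 * (T^2 / (real j + 2))"
    using e jn by (intro add_left_mono mult_left_mono divide_left_mono) auto
  also have "\<dots> \<le> (c * D j - c^2 / (2 * e) + (1 - e) / 2 * ((D j)^2 / (real j + 1))) + (c * ?x + ?x^2 / 2)"
    using stepB[of "real j + 1" e c "D j" ?x "c^2 / (2 * e)"] e by (simp add: add_ac)
  finally have "ennreal (c * T - c^2 / (2 * e) + (1 - e) / 2 * (T^2 / (real n + 2)))
     \<le> ennreal (c * D j - c^2 / (2 * e) + (1 - e) / 2 * ((D j)^2 / (real j + 1))) + ennreal (c * ?x + ?x^2 / 2)"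
    using j c_pos by (meson ennreal_add_le ennreal_leI order_trans add_nonneg_nonneg mult_nonneg_nonneg zero_le_power2 divide_nonneg_pos less_imp_le diff_ge_0_iff_ge zero_less_numeral)
  also have "\<dots> \<le> Ia (D j) + ennreal (c * ?x + ?x^2 / 2)" using boundB_D[OF e, of j] by (simp add: add_right_mono)
  also have "\<dots> \<le> Ia T" using Ia_step[of j T] j by simp
  finally show ?thesis .
qed

end

lemma Exp1_prob: "prob_space Exp1"
  unfolding Exp1_def by (rule prob_space_exponential_density) simp

lemma sets_Exp1[simp, measurable_cong]: "sets Exp1 = sets borel"
  unfolding Exp1_def by simp

lemma space_Exp1[simp]: "space Exp1 = UNIV"
  unfolding Exp1_def by simp

interpretation Ex: prob_space Exp1 by (rule Exp1_prob)

interpretation PP: product_prob_space "\<lambda>_::nat. Exp1" "UNIV :: nat set"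
  by unfold_locales

lemma PiExp_prob: "prob_space (\<Pi>\<^sub>M i\<in>(UNIV::nat set). Exp1)"
  by (rule prob_space_PiM) (rule Exp1_prob)

lemma EH_prob: "prob_space EH_space"
  unfolding EH_space_def by (intro prob_space_pair PiExp_prob)

lemma laplace_Exp1: assumes "0 < \<delta>"
  shows "(\<integral>\<^sup>+ x. ennreal (exp (- \<delta> * x)) \<partial>Exp1) = ennreal (1 / (1 + \<delta>))"
proof -
  define l where "l = 1 + \<delta>"
  have l: "0 < l" using assms unfolding l_def by simp
  have "(\<integral>\<^sup>+ x. ennreal (exp (- \<delta> * x)) \<partial>Exp1)
      = (\<integral>\<^sup>+ x. ennreal (exponential_density 1 x) * ennreal (exp (- \<delta> * x)) \<partial>lborel)"
    unfolding Exp1_def by (rule nn_integral_density) measurable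
  also have "\<dots> = (\<integral>\<^sup>+ x. ennreal (exp (- l * x)) * indicator {0..} x \<partial>lborel)"
    by (intro nn_integral_cong)
       (auto simp: l_def exponential_density_def indicator_def ennreal_mult'[symmetric] exp_add[symmetric] algebra_simps)
  also have "\<dots> = ennreal (0 - (- exp (- l * 0) / l))"
  proof (rule nn_integral_FTC_atLeast)
    show "(\<lambda>x. exp (- l * x)) \<in> borel_measurable borel" by measurable
    fix x :: real
    show "((\<lambda>x. - exp (- l * x) / l) has_real_derivative exp (- l * x)) (at x)"
      using l by (auto intro!: derivative_eq_intros simp: field_simps)
    show "0 \<le> exp (- l * x)" by simp
  next
    have "((\<lambda>x. exp (- l * x)) \<longlongrightarrow> 0) at_top"
      using l by real_asymp
    then show "((\<lambda>x. - exp (- l * x) / l) \<longlongrightarrow> 0) at_top"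
      using tendsto_divide[OF tendsto_minus[of _ 0] tendsto_const[of l]] l by simp
  qed
  also have "\<dots> = ennreal (1 / (1 + \<delta>))" by (simp add: l_def)
  finally show ?thesis .
qed

lemma PiM_prod: assumes "\<And>j. f j \<in> borel_measurable borel"
  shows "(\<integral>\<^sup>+ x. (\<Prod>j<m. f j (x j)) \<partial>(\<Pi>\<^sub>M i\<in>(UNIV::nat set). Exp1)) = (\<Prod>j<m. \<integral>\<^sup>+ y. f j y \<partial>Exp1)"
proof -
  have [measurable]: "\<And>j. f j \<in> borel_measurable Exp1" using assms by simp
  have "(\<integral>\<^sup>+ x. (\<Prod>j<m. f j (x j)) \<partial>(\<Pi>\<^sub>M i\<in>(UNIV::nat set). Exp1))
      = (\<integral>\<^sup>+ x. (\<Prod>j<m. f j (restrict x {..<m} j)) \<partial>(\<Pi>\<^sub>M i\<in>(UNIV::nat set). Exp1))"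
    by (intro nn_integral_cong prod.cong) auto
  also have "\<dots> = (\<integral>\<^sup>+ y. (\<Prod>j<m. f j (y j)) \<partial>distr (\<Pi>\<^sub>M i\<in>(UNIV::nat set). Exp1) (\<Pi>\<^sub>M i\<in>{..<m}. Exp1) (\<lambda>x. restrict x {..<m}))"
    by (rule nn_integral_distr[symmetric], rule measurable_restrict_subset) auto
  also have "\<dots> = (\<integral>\<^sup>+ y. (\<Prod>j<m. f j (y j)) \<partial>(\<Pi>\<^sub>M i\<in>{..<m}. Exp1))"
    by (subst PP.distr_PiM_restrict_finite) auto
  also have "\<dots> = (\<Prod>j<m. \<integral>\<^sup>+ y. f j y \<partial>Exp1)"
    by (rule PP.product_nn_integral_prod) auto
  finally show ?thesis .
qed

lemma EH_fst: assumes [measurable]: "g \<in> borel_measurable (\<Pi>\<^sub>M i\<in>(UNIV::nat set). Exp1)"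
  shows "(\<integral>\<^sup>+ \<omega>. g (fst \<omega>) \<partial>EH_space) = (\<integral>\<^sup>+ x. g x \<partial>(\<Pi>\<^sub>M i\<in>(UNIV::nat set). Exp1))"
proof -
  have "(\<integral>\<^sup>+ x. g x \<partial>(\<Pi>\<^sub>M i\<in>(UNIV::nat set). Exp1))
     = (\<integral>\<^sup>+ x. g x \<partial>distr EH_space (\<Pi>\<^sub>M i\<in>(UNIV::nat set). Exp1) fst)"
    unfolding EH_space_def by (simp add: prob_space.distr_pair_fst[OF PiExp_prob])
  also have "\<dots> = (\<integral>\<^sup>+ \<omega>. g (fst \<omega>) \<partial>EH_space)"
    by (rule nn_integral_distr) (auto simp: EH_space_def)
  finally show ?thesis by simp
qed

lemma arrival_meas[measurable]: "(\<lambda>\<omega>. arrival (fst \<omega>) k) \<in> borel_measurable EH_space"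
  unfolding arrival_def EH_space_def by measurable

definition Nn :: "real \<Rightarrow> (nat \<Rightarrow> real) \<times> (nat \<Rightarrow> real) \<Rightarrow> ennreal" where
  "Nn T \<omega> = (\<Sum>k. if arrival (fst \<omega>) (Suc k) < T then 1 else 0)"

lemma Nn_meas[measurable]: "Nn T \<in> borel_measurable EH_space"
  unfolding Nn_def by measurable

lemma term_bound: assumes "0 < \<delta>"
  shows "(\<integral>\<^sup>+ \<omega>. (if arrival (fst \<omega>) (Suc k) < T then 1 else 0) \<partial>EH_space)
     \<le> ennreal (exp (\<delta> * T) * (1 / (1 + \<delta>)) ^ Suc k)"
proof -
  have "(\<integral>\<^sup>+ \<omega>. (if arrival (fst \<omega>) (Suc k) < T then 1 else 0) \<partial>EH_space)
     \<le> (\<integral>\<^sup>+ \<omega>. ennreal (exp (\<delta> * T)) * (\<Prod>j<Suc k. ennreal (exp (- \<delta> * fst \<omega> j))) \<partial>EH_space)"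
  proof (rule nn_integral_mono)
    fix \<omega> :: "(nat \<Rightarrow> real) \<times> (nat \<Rightarrow> real)"
    have eq: "ennreal (exp (\<delta> * T)) * (\<Prod>j<Suc k. ennreal (exp (- \<delta> * fst \<omega> j)))
        = ennreal (exp (\<delta> * (T - arrival (fst \<omega>) (Suc k))))"
      by (simp add: prod_ennreal ennreal_mult'[symmetric] arrival_def exp_sum[symmetric]
          exp_add[symmetric] sum_distrib_left algebra_simps sum_negf)
    show "(if arrival (fst \<omega>) (Suc k) < T then 1 else 0)
       \<le> ennreal (exp (\<delta> * T)) * (\<Prod>j<Suc k. ennreal (exp (- \<delta> * fst \<omega> j)))"
      unfolding eq using assms by (auto intro!: ennreal_leI)
  qed
  also have "\<dots> = ennreal (exp (\<delta> * T)) * (\<integral>\<^sup>+ \<omega>. (\<Prod>j<Suc k. ennreal (exp (- \<delta> * fst \<omega> j))) \<partial>EH_space)"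
    by (rule nn_integral_cmult) (simp add: EH_space_def)
  also have "(\<integral>\<^sup>+ \<omega>. (\<Prod>j<Suc k. ennreal (exp (- \<delta> * fst \<omega> j))) \<partial>EH_space)
      = (\<integral>\<^sup>+ x. (\<Prod>j<Suc k. ennreal (exp (- \<delta> * x j))) \<partial>(\<Pi>\<^sub>M i\<in>(UNIV::nat set). Exp1))"
    by (rule EH_fst) measurable
  also have "\<dots> = (\<Prod>j<Suc k. \<integral>\<^sup>+ y. ennreal (exp (- \<delta> * y)) \<partial>Exp1)"
    by (rule PiM_prod[where f="\<lambda>j y. ennreal (exp (- \<delta> * y))"]) measurable
  also have "\<dots> = ennreal ((1 / (1 + \<delta>)) ^ Suc k)"
  proof -
    have qnn: "0 \<le> 1 / (1 + \<delta>)" using assms by simp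
    show ?thesis by (simp only: laplace_Exp1[OF assms] prod_constant card_lessThan ennreal_power[OF qnn])
  qed
  finally show ?thesis by (simp add: ennreal_mult'[symmetric])
qed

lemma term_bound1: "(\<integral>\<^sup>+ \<omega>. (if arrival (fst \<omega>) (Suc k) < T then 1 else 0) \<partial>EH_space) \<le> 1"
proof -
  interpret prob_space EH_space by (rule EH_prob)
  have "(\<integral>\<^sup>+ \<omega>. (if arrival (fst \<omega>) (Suc k) < T then 1 else 0) \<partial>EH_space) \<le> (\<integral>\<^sup>+ \<omega>. 1 \<partial>EH_space)"
    by (intro nn_integral_mono) auto
  then show ?thesis by (simp add: emeasure_space_1)
qed

lemma exp_le_pow: assumes "0 < \<delta>" "0 \<le> T" "(1 + \<delta>) * T \<le> real m"
  shows "exp (\<delta> * T) * (1 / (1 + \<delta>)) ^ m \<le> 1"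
proof -
  have "exp (\<delta> / (1 + \<delta>)) \<le> 1 + \<delta>"
  proof -
    have "1 + (- \<delta> / (1 + \<delta>)) \<le> exp (- \<delta> / (1 + \<delta>))" by (rule exp_ge_add_one_self)
    moreover have "1 + (- \<delta> / (1 + \<delta>)) = 1 / (1 + \<delta>)" using assms by (simp add: field_simps)
    ultimately have "1 / (1 + \<delta>) \<le> exp (- \<delta> / (1 + \<delta>))" by simp
    then have "exp (\<delta> / (1 + \<delta>)) * (1 / (1 + \<delta>)) \<le> exp (\<delta> / (1 + \<delta>)) * exp (- \<delta> / (1 + \<delta>))"
      by (intro mult_left_mono) auto
    also have "\<dots> = 1" by (simp add: exp_add[symmetric])
    finally show ?thesis using assms by (simp add: pos_divide_le_eq)
  qed
  then have "exp (\<delta> / (1 + \<delta>)) ^ m \<le> (1 + \<delta>) ^ m" by (intro power_mono) auto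
  moreover have "exp (\<delta> * T) \<le> exp (\<delta> / (1 + \<delta>)) ^ m"
  proof -
    have "\<delta> * T \<le> real m * (\<delta> / (1 + \<delta>))"
    proof -
      have "\<delta> * ((1 + \<delta>) * T) \<le> \<delta> * real m" using assms by (intro mult_left_mono) auto
      then show ?thesis using assms by (simp add: field_simps)
    qed
    then show ?thesis by (simp add: exp_of_nat_mult[symmetric])
  qed
  ultimately have "exp (\<delta> * T) \<le> (1 + \<delta>) ^ m" by linarith
  then show ?thesis using assms by (simp add: field_simps power_one_over)
qed

lemma count_exp: assumes "0 < \<delta>" "0 \<le> T"
  shows "(\<integral>\<^sup>+ \<omega>. Nn T \<omega> \<partial>EH_space) \<le> ennreal ((1 + \<delta>) * T + 1 + 1 / \<delta>)"
proof -
  define m where "m = nat \<lceil>(1 + \<delta>) * T\<rceil>"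
  have m0: "0 \<le> (1 + \<delta>) * T" using assms by simp
  then have mm: "real m = real_of_int \<lceil>(1 + \<delta>) * T\<rceil>" unfolding m_def by simp
  have m: "(1 + \<delta>) * T \<le> real m" "real m \<le> (1 + \<delta>) * T + 1"
    unfolding mm using ceiling_correct[of "(1 + \<delta>) * T"] by linarith+
  define q where "q = 1 / (1 + \<delta>)"
  have q: "0 < q" "q < 1" using assms unfolding q_def by auto
  define b where "b k = (if k < m then 1 else exp (\<delta> * T) * q ^ Suc k)" for k
  have b_nonneg: "0 \<le> b k" for k unfolding b_def using q by auto
  have "(\<lambda>k. b (k + m)) sums (exp (\<delta> * T) * q ^ Suc m * (1 / (1 - q)))"
  proof -
    have "(\<lambda>k. exp (\<delta> * T) * q ^ Suc m * q ^ k) sums (exp (\<delta> * T) * q ^ Suc m * (1 / (1 - q)))"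
      by (rule sums_mult, rule geometric_sums) (use q in auto)
    moreover have "b (k + m) = exp (\<delta> * T) * q ^ Suc m * q ^ k" for k
      unfolding b_def by (simp add: power_add)
    ultimately show ?thesis by simp
  qed
  then have "b sums (exp (\<delta> * T) * q ^ Suc m * (1 / (1 - q)) + (\<Sum>i<m. b i))"
    by (simp only: sums_iff_shift)
  moreover have "(\<Sum>i<m. b i) = real m" by (simp add: b_def)
  ultimately have bs: "b sums (exp (\<delta> * T) * q ^ Suc m * (1 / (1 - q)) + real m)" by simp
  have "exp (\<delta> * T) * q ^ Suc m * (1 / (1 - q)) = (exp (\<delta> * T) * q ^ m) * (q / (1 - q))"
    by (simp add: algebra_simps)
  also have "\<dots> \<le> 1 * (q / (1 - q))"
    using exp_le_pow[OF assms m(1)] q unfolding q_def by (intro mult_right_mono) auto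
  also have "q / (1 - q) = 1 / \<delta>" unfolding q_def using assms by (simp add: field_simps)
  finally have V: "exp (\<delta> * T) * q ^ Suc m * (1 / (1 - q)) + real m \<le> (1 + \<delta>) * T + 1 + 1 / \<delta>"
    using m by linarith
  have "(\<integral>\<^sup>+ \<omega>. Nn T \<omega> \<partial>EH_space) = (\<Sum>k. \<integral>\<^sup>+ \<omega>. (if arrival (fst \<omega>) (Suc k) < T then 1 else 0) \<partial>EH_space)"
    unfolding Nn_def by (rule nn_integral_suminf) measurable
  also have "\<dots> \<le> (\<Sum>k. ennreal (b k))"
  proof (rule suminf_le)
    fix k show "(\<integral>\<^sup>+ \<omega>. (if arrival (fst \<omega>) (Suc k) < T then 1 else 0) \<partial>EH_space) \<le> ennreal (b k)"
      using term_bound[OF assms(1), where T=T and k=k] term_bound1[where T=T and k=k] unfolding b_def q_def by auto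
  qed auto
  also have "\<dots> = ennreal (exp (\<delta> * T) * q ^ Suc m * (1 / (1 - q)) + real m)"
    by (rule suminf_ennreal_eq[OF b_nonneg bs])
  also have "\<dots> \<le> ennreal ((1 + \<delta>) * T + 1 + 1 / \<delta>)" by (rule ennreal_leI[OF V])
  finally show ?thesis .
qed

lemma Nn_finite: assumes "finite {k. 1 \<le> k \<and> arrival (fst \<omega>) k < T}"
  shows "Nn T \<omega> = of_nat (card {k. 1 \<le> k \<and> arrival (fst \<omega>) k < T})"
proof -
  have fin: "finite {k. arrival (fst \<omega>) (Suc k) < T}"
  proof -
    have "Suc ` {k. arrival (fst \<omega>) (Suc k) < T} \<subseteq> {k. 1 \<le> k \<and> arrival (fst \<omega>) k < T}" by auto
    then show ?thesis using assms finite_imageD finite_subset inj_Suc by (metis inj_on_subset subset_UNIV)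
  qed
  have "Nn T \<omega> = (\<integral>\<^sup>+ k. indicator {k. arrival (fst \<omega>) (Suc k) < T} k \<partial>count_space UNIV)"
    unfolding Nn_def nn_integral_count_space_nat by (rule arg_cong[where f=suminf]) (auto simp: fun_eq_iff indicator_def)
  also have "\<dots> = of_nat (card {k. arrival (fst \<omega>) (Suc k) < T})"
    using fin by simp
  also have "card {k. arrival (fst \<omega>) (Suc k) < T} = card {k. 1 \<le> k \<and> arrival (fst \<omega>) k < T}"
  proof -
    have "{k. 1 \<le> k \<and> arrival (fst \<omega>) k < T} = Suc ` {k. arrival (fst \<omega>) (Suc k) < T}"
      by (auto simp: image_iff) (metis Suc_le_D)
    then show ?thesis by (simp add: card_image)
  qed
  finally show ?thesis .
qed

lemma jensen_like:
  fixes M :: "'a measure" and N X :: "'a \<Rightarrow> ennreal"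
  assumes P: "prob_space M" and Nm[measurable]: "N \<in> borel_measurable M"
    and NB: "(\<integral>\<^sup>+x. N x \<partial>M) + 2 \<le> ennreal B" and B: "0 < B" and beta: "0 \<le> \<beta>"
    and AE: "AE x in M. N x < top \<and> ennreal (\<alpha> + \<beta> * (1 / (enn2real (N x) + 2))) \<le> X x"
  shows "ennreal (\<alpha> + \<beta> / B) \<le> (\<integral>\<^sup>+x. X x \<partial>M)"
proof -
  interpret prob_space M by (rule P)
  define \<Phi> where "\<Phi> x = ennreal (\<alpha> + \<beta> * (1 / (enn2real (N x) + 2)))" for x
  have [measurable]: "\<Phi> \<in> borel_measurable M" unfolding \<Phi>_def by measurable
  have X: "(\<integral>\<^sup>+x. \<Phi> x \<partial>M) \<le> (\<integral>\<^sup>+x. X x \<partial>M)"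
    by (rule nn_integral_mono_AE) (use AE in \<open>auto simp: \<Phi>_def\<close>)
  have pw: "AE x in M. ennreal (\<alpha> + 2 * \<beta> / B) \<le> \<Phi> x + ennreal (\<beta> / B^2) * (N x + 2)"
    using AE
  proof (rule eventually_mono)
    fix x assume H: "N x < top \<and> ennreal (\<alpha> + \<beta> * (1 / (enn2real (N x) + 2))) \<le> X x"
    define n where "n = enn2real (N x)"
    have n0: "0 \<le> n" unfolding n_def by simp
    have Nx: "N x = ennreal n" using H unfolding n_def by (cases "N x") auto
    define m where "m = n + 2"
    have m: "0 < m" using n0 unfolding m_def by simp
    have "N x + 2 = ennreal m" unfolding Nx m_def using n0 ennreal_plus[of n 2] by simp
    then have e2: "ennreal (\<beta> / B^2) * (N x + 2) = ennreal (\<beta> / B^2 * m)"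
      by (simp only:) (rule ennreal_mult[symmetric], use m beta in auto)
    have eq: "\<Phi> x + ennreal (\<beta> / B^2) * (N x + 2) = ennreal (\<alpha> + \<beta> * (1 / m)) + ennreal (\<beta> / B^2 * m)"
      unfolding \<Phi>_def e2 n_def[symmetric] m_def[symmetric] by (rule refl)
    have "\<alpha> + 2 * \<beta> / B \<le> (\<alpha> + \<beta> * (1 / m)) + \<beta> / B^2 * m"
    proof -
      have "(\<alpha> + \<beta> * (1 / m)) + \<beta> / B^2 * m - (\<alpha> + 2 * \<beta> / B) = \<beta> * ((m - B)^2 / (m * B^2))"
        using m B by (simp add: field_simps power2_eq_square)
      moreover have "0 \<le> \<beta> * ((m - B)^2 / (m * B^2))" using m B beta by simp
      ultimately show ?thesis by linarith
    qed
    then have "ennreal (\<alpha> + 2 * \<beta> / B) \<le> ennreal ((\<alpha> + \<beta> * (1 / m)) + \<beta> / B^2 * m)"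
      by (rule ennreal_leI)
    also have "\<dots> \<le> ennreal (\<alpha> + \<beta> * (1 / m)) + ennreal (\<beta> / B^2 * m)"
      by (rule ennreal_add_le) (use m beta in simp)
    finally show "ennreal (\<alpha> + 2 * \<beta> / B) \<le> \<Phi> x + ennreal (\<beta> / B^2) * (N x + 2)"
      unfolding eq .
  qed
  have "ennreal (\<alpha> + 2 * \<beta> / B) = (\<integral>\<^sup>+x. ennreal (\<alpha> + 2 * \<beta> / B) \<partial>M)"
    by (simp add: emeasure_space_1)
  also have "\<dots> \<le> (\<integral>\<^sup>+x. \<Phi> x + ennreal (\<beta> / B^2) * (N x + 2) \<partial>M)"
    by (rule nn_integral_mono_AE[OF pw])
  also have "\<dots> = (\<integral>\<^sup>+x. \<Phi> x \<partial>M) + ennreal (\<beta> / B^2) * ((\<integral>\<^sup>+x. N x \<partial>M) + 2)"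
    by (simp add: nn_integral_add nn_integral_cmult emeasure_space_1)
  also have "\<dots> \<le> (\<integral>\<^sup>+x. \<Phi> x \<partial>M) + ennreal (\<beta> / B^2) * ennreal B"
    by (intro add_left_mono mult_left_mono NB) auto
  also have "ennreal (\<beta> / B^2) * ennreal B = ennreal (\<beta> / B)"
    using B beta by (simp add: ennreal_mult[symmetric] power2_eq_square)
  finally have main: "ennreal (\<alpha> + 2 * \<beta> / B) \<le> (\<integral>\<^sup>+x. \<Phi> x \<partial>M) + ennreal (\<beta> / B)" .
  have "ennreal (\<alpha> + \<beta> / B) \<le> (\<integral>\<^sup>+x. \<Phi> x \<partial>M)"
  proof (cases "(\<integral>\<^sup>+x. \<Phi> x \<partial>M)")
    case (real r)
    show ?thesis
    proof (cases "\<alpha> + \<beta> / B \<le> 0")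
      case True then show ?thesis by (simp add: ennreal_neg)
    next
      case False
      have "0 \<le> \<beta> / B" using beta B by simp
      then have "ennreal (\<alpha> + 2 * \<beta> / B) \<le> ennreal (r + \<beta> / B)"
        using main real by (simp add: ennreal_plus[symmetric] del: ennreal_plus)
      then have "\<alpha> + 2 * \<beta> / B \<le> r + \<beta> / B"
        using real \<open>0 \<le> \<beta> / B\<close> by (subst (asm) ennreal_le_iff) auto
      then have "\<alpha> + \<beta> / B \<le> r" by simp
      then show ?thesis using real by (simp add: ennreal_leI)
    qed
  qed simp
  with X show ?thesis by (meson order_trans)
qed

lemma limsup_lb:
  fixes f :: "real \<Rightarrow> ennreal"
  assumes "\<And>y. y < a \<Longrightarrow> eventually (\<lambda>T. ennreal y \<le> f T) at_top"
  shows "ennreal a \<le> Limsup at_top f"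
proof -
  have le: "ennreal y \<le> Limsup at_top f" if "y < a" for y
    by (rule le_Limsup) (use assms[OF that] in auto)
  show ?thesis
  proof (cases "a \<le> 0")
    case True then show ?thesis by (simp add: ennreal_neg)
  next
    case False
    show ?thesis
    proof (cases "Limsup at_top f")
      case (real r)
      have "a \<le> r"
      proof (rule dense_le_bounded[of 0 a])
        show "0 < a" using False by simp
        fix w assume "0 < w" "w < a"
        then show "w \<le> r" using le[of w] real by simp
      qed
      then show ?thesis using real by (simp add: ennreal_leI)
    qed simp
  qed
qed

lemma policy_good:
  assumes F: "feasible_policy d db t tb" and d: "0 < d" and db: "0 < db"
  shows "AE \<omega> in EH_space. detpol (\<lambda>i. t i \<omega>) (\<lambda>i. tb i \<omega> + db) (d + db)
            \<and> (\<forall>i. i \<le> arrivals_before (fst \<omega>) (t i \<omega>))"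
proof -
  have "AE \<omega> in EH_space.
        0 \<le> t 0 \<omega> \<and>
        (\<forall>i. t i \<omega> + d \<le> tb i \<omega>) \<and>
        (\<forall>i. tb i \<omega> + db \<le> t (Suc i) \<omega>) \<and>
        (\<forall>i. i \<le> arrivals_before (fst \<omega>) (t i \<omega>)) \<and>
        (\<forall>i. i \<le> arrivals_before (snd \<omega>) (tb i \<omega>))"
    using F unfolding feasible_policy_def by blast
  then show ?thesis
  proof (rule eventually_mono)
    fix \<omega> assume H: "0 \<le> t 0 \<omega> \<and>
        (\<forall>i. t i \<omega> + d \<le> tb i \<omega>) \<and>
        (\<forall>i. tb i \<omega> + db \<le> t (Suc i) \<omega>) \<and>
        (\<forall>i. i \<le> arrivals_before (fst \<omega>) (t i \<omega>)) \<and>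
        (\<forall>i. i \<le> arrivals_before (snd \<omega>) (tb i \<omega>))"
    have "detpol (\<lambda>i. t i \<omega>) (\<lambda>i. tb i \<omega> + db) (d + db)"
    proof
      show "0 < d + db" using d db by simp
      show "0 \<le> t 0 \<omega>" using H by simp
      fix i
      show "t i \<omega> + (d + db) \<le> tb i \<omega> + db" using H by force
      show "tb i \<omega> + db \<le> t (Suc i) \<omega>" using H by blast
    qed
    then show "detpol (\<lambda>i. t i \<omega>) (\<lambda>i. tb i \<omega> + db) (d + db)
            \<and> (\<forall>i. i \<le> arrivals_before (fst \<omega>) (t i \<omega>))" using H by blast
  qed
qed

lemma area_A:
  assumes F: "feasible_policy d db t tb" and d: "0 < d" and db: "0 < db" and T: "0 \<le> T"
  shows "ennreal (3/2 * (d + db) * T - 5/4 * (d + db)^2) \<le> expected_area db t tb T"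
proof -
  interpret EP: prob_space EH_space by (rule EH_prob)
  have "ennreal (3/2 * (d + db) * T - 5/4 * (d + db)^2)
      = (\<integral>\<^sup>+ \<omega>. ennreal (3/2 * (d + db) * T - 5/4 * (d + db)^2) \<partial>EH_space)"
    by (simp add: EP.emeasure_space_1)
  also have "\<dots> \<le> expected_area db t tb T"
    unfolding expected_area_def
  proof (rule nn_integral_mono_AE)
    show "AE \<omega> in EH_space. ennreal (3/2 * (d + db) * T - 5/4 * (d + db)^2)
        \<le> (\<integral>\<^sup>+ s\<in>{0..T}. ennreal (age db (\<lambda>i. t i \<omega>) (\<lambda>i. tb i \<omega>) s) \<partial>lborel)"
      using policy_good[OF F d db]
    proof (rule eventually_mono)
      fix \<omega> assume H: "detpol (\<lambda>i. t i \<omega>) (\<lambda>i. tb i \<omega> + db) (d + db)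
            \<and> (\<forall>i. i \<le> arrivals_before (fst \<omega>) (t i \<omega>))"
      interpret P: detpol "\<lambda>i. t i \<omega>" "\<lambda>i. tb i \<omega> + db" "d + db" using H by blast
      have eq: "(\<integral>\<^sup>+ s\<in>{0..T}. ennreal (age db (\<lambda>i. t i \<omega>) (\<lambda>i. tb i \<omega>) s) \<partial>lborel) = P.Ia T"
        unfolding P.Ia_def P.L_def age_def latest_gen_def by simp
      show "ennreal (3/2 * (d + db) * T - 5/4 * (d + db)^2)
        \<le> (\<integral>\<^sup>+ s\<in>{0..T}. ennreal (age db (\<lambda>i. t i \<omega>) (\<lambda>i. tb i \<omega>) s) \<partial>lborel)"
        unfolding eq by (rule P.boundA[OF T])
    qed
  qed
  finally show ?thesis .
qed

lemma area_B:
  assumes F: "feasible_policy d db t tb" and d: "0 < d" and db: "0 < db" and T: "0 < T"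
    and e: "0 < e" "e < 1"
  shows "ennreal ((d + db) * T - (d + db)^2 / (2 * e) + ((1 - e) / 2 * T^2) / ((1 + e) * T + 3 + 1 / e))
     \<le> expected_area db t tb T"
  unfolding expected_area_def
proof (rule jensen_like[OF EH_prob Nn_meas])
  show "(\<integral>\<^sup>+ \<omega>. Nn T \<omega> \<partial>EH_space) + 2 \<le> ennreal ((1 + e) * T + 3 + 1 / e)"
  proof -
    have "(\<integral>\<^sup>+ \<omega>. Nn T \<omega> \<partial>EH_space) + 2 \<le> ennreal ((1 + e) * T + 1 + 1 / e) + ennreal 2"
      using count_exp[OF e(1), of T] T by (simp add: add_right_mono)
    also have "\<dots> = ennreal ((1 + e) * T + 1 + 1 / e + 2)"
      using T e by (intro ennreal_plus[symmetric]) auto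
    finally show ?thesis by (simp add: add_ac)
  qed
  show "0 < (1 + e) * T + 3 + 1 / e" using T e by (simp add: add_pos_pos)
  show "0 \<le> (1 - e) / 2 * T^2" using e by simp
  show "AE \<omega> in EH_space. Nn T \<omega> < top \<and>
     ennreal ((d + db) * T - (d + db)^2 / (2 * e) + (1 - e) / 2 * T^2 * (1 / (enn2real (Nn T \<omega>) + 2)))
     \<le> (\<integral>\<^sup>+ s\<in>{0..T}. ennreal (age db (\<lambda>i. t i \<omega>) (\<lambda>i. tb i \<omega>) s) \<partial>lborel)"
    using policy_good[OF F d db]
  proof (rule eventually_mono)
    fix \<omega> assume H: "detpol (\<lambda>i. t i \<omega>) (\<lambda>i. tb i \<omega> + db) (d + db)
          \<and> (\<forall>i. i \<le> arrivals_before (fst \<omega>) (t i \<omega>))"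
    interpret P: detpol "\<lambda>i. t i \<omega>" "\<lambda>i. tb i \<omega> + db" "d + db" using H by blast
    have en: "i \<le> card {k. 1 \<le> k \<and> arrival (fst \<omega>) k < t i \<omega>}" for i
      using H unfolding arrivals_before_def by blast
    define S where "S = {k. 1 \<le> k \<and> arrival (fst \<omega>) k < T}"
    define n where "n = card S"
    have fin: "finite S"
    proof -
      obtain j :: nat where j: "T / (d + db) \<le> real j" using real_arch_simple by blast
      have "T \<le> (d + db) * (real j + 1)" using j d db by (simp add: field_simps)
      also have "\<dots> \<le> tb j \<omega> + db" by (rule P.D_lower)
      also have "\<dots> \<le> t (Suc j) \<omega>" by (rule P.Dt)
      finally have Tj: "T \<le> t (Suc j) \<omega>" .
      have "0 < card {k. 1 \<le> k \<and> arrival (fst \<omega>) k < t (Suc j) \<omega>}"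
        using en[of "Suc j"] by linarith
      then have "finite {k. 1 \<le> k \<and> arrival (fst \<omega>) k < t (Suc j) \<omega>}" using card_gt_0_iff by blast
      moreover have "S \<subseteq> {k. 1 \<le> k \<and> arrival (fst \<omega>) k < t (Suc j) \<omega>}"
        unfolding S_def using Tj by auto
      ultimately show ?thesis by (rule finite_subset[rotated])
    qed
    have kn: "k \<le> n" if "tb k \<omega> + db \<le> T" for k
    proof -
      have "t k \<omega> + (d + db) \<le> tb k \<omega> + db" by (rule P.tD)
      then have "t k \<omega> < T" using that d db by linarith
      then have "{j. 1 \<le> j \<and> arrival (fst \<omega>) j < t k \<omega>} \<subseteq> S" unfolding S_def by auto
      then have "card {j. 1 \<le> j \<and> arrival (fst \<omega>) j < t k \<omega>} \<le> n"
        unfolding n_def using fin by (rule card_mono[rotated])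
      then show ?thesis using en[of k] by linarith
    qed
    have Nn_eq: "Nn T \<omega> = of_nat n" unfolding n_def S_def by (rule Nn_finite) (use fin in \<open>simp add: S_def\<close>)
    have eq: "(\<integral>\<^sup>+ s\<in>{0..T}. ennreal (age db (\<lambda>i. t i \<omega>) (\<lambda>i. tb i \<omega>) s) \<partial>lborel) = P.Ia T"
      unfolding P.Ia_def P.L_def age_def latest_gen_def by simp
    have B: "ennreal ((d + db) * T - (d + db)^2 / (2 * e) + (1 - e) / 2 * (T^2 / (real n + 2))) \<le> P.Ia T"
      by (rule P.boundB[OF e]) (use T kn in auto)
    have "(1 - e) / 2 * T^2 * (1 / (enn2real (Nn T \<omega>) + 2)) = (1 - e) / 2 * (T^2 / (real n + 2))"
      unfolding Nn_eq by simp
    then show "Nn T \<omega> < top \<and>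
     ennreal ((d + db) * T - (d + db)^2 / (2 * e) + (1 - e) / 2 * T^2 * (1 / (enn2real (Nn T \<omega>) + 2)))
     \<le> (\<integral>\<^sup>+ s\<in>{0..T}. ennreal (age db (\<lambda>i. t i \<omega>) (\<lambda>i. tb i \<omega>) s) \<partial>lborel)"
      unfolding eq using B Nn_eq by (simp add: of_nat_less_top)
  qed
qed

lemma ineqB: fixes e C T K c :: real
  assumes e: "0 < e" "e < 1" and C: "0 < C" and T: "0 < T" and K: "0 \<le> K"
  shows "c + 1/2 - e - (K + C) / T \<le> 1 / T * (c * T - K + ((1 - e) / 2 * T^2) / ((1 + e) * T + C))"
proof -
  define B where "B = (1 + e) * T + C"
  have B: "0 < B" unfolding B_def using e C T by (simp add: add_pos_pos)
  have 1: "1 / T * (c * T - K + ((1 - e) / 2 * T^2) / B) = c - K / T + (1 - e) / 2 * (T / B)"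
    using T B by (simp add: field_simps power2_eq_square)
  have 2: "1 / (1 + e) - T / B = C / ((1 + e) * B)"
    using e B unfolding B_def by (simp add: field_simps)
  have "T \<le> (1 + e) * B"
  proof -
    have "(1 + e) * B = (1 + e) * (1 + e) * T + (1 + e) * C" unfolding B_def by (simp add: algebra_simps)
    moreover have "T \<le> (1 + e) * (1 + e) * T" using e T by (simp add: algebra_simps)
    moreover have "0 \<le> (1 + e) * C" using e C by simp
    ultimately show ?thesis by linarith
  qed
  then have 3: "C / ((1 + e) * B) \<le> C / T" using C T by (intro divide_left_mono) auto
  have 4: "(1 - e) / 2 * (1 / (1 + e) - C / T) \<le> (1 - e) / 2 * (T / B)"
    using 2 3 e by (intro mult_left_mono) auto
  have 5: "(1 - e) / 2 * (1 / (1 + e) - C / T) = (1 - e) / 2 * (1 / (1 + e)) - (1 - e) / 2 * (C / T)"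
    by (simp add: right_diff_distrib)
  have 6: "1/2 - e \<le> (1 - e) / 2 * (1 / (1 + e))"
  proof -
    have "(1 - e) / 2 * (1 / (1 + e)) - (1/2 - e) = e^2 / (1 + e)" using e by (simp add: field_simps power2_eq_square)
    moreover have "0 \<le> e^2 / (1 + e)" using e by simp
    ultimately show ?thesis by linarith
  qed
  have 7: "(1 - e) / 2 * (C / T) \<le> C / T"
  proof -
    have "0 \<le> C / T" using C T by simp
    then have "(1 - e) / 2 * (C / T) \<le> 1 * (C / T)" using e by (intro mult_right_mono) auto
    then show ?thesis by simp
  qed
  have 8: "(K + C) / T = K / T + C / T" by (simp add: add_divide_distrib)
  show ?thesis unfolding B_def[symmetric] 1 using 4 5 6 7 8 by linarith
qed

lemma policy_bound:
  assumes F: "feasible_policy d db t tb" and d: "0 < d" and db: "0 < db"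
  shows "ennreal (max (1/2 + d + db) (3/2 * (d + db))) \<le> avg_age db t tb"
proof -
  define c where "c = d + db"
  have c: "0 < c" using d db unfolding c_def by simp
  have A: "ennreal (3/2 * c) \<le> avg_age db t tb"
    unfolding avg_age_def
  proof (rule limsup_lb)
    fix y assume y: "y < 3/2 * c"
    define N where "N = max 1 (5/4 * c^2 / (3/2 * c - y))"
    show "eventually (\<lambda>T. ennreal y \<le> ennreal (1 / T) * expected_area db t tb T) at_top"
      unfolding eventually_at_top_linorder
    proof (intro exI[of _ N] allI impI)
      fix T assume TN: "N \<le> T"
      then have T: "0 < T" unfolding N_def by simp
      have "5/4 * c^2 / (3/2 * c - y) \<le> T" using TN unfolding N_def by simp
      then have "5/4 * c^2 \<le> T * (3/2 * c - y)"
      proof -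
        assume h: "5/4 * c^2 / (3/2 * c - y) \<le> T"
        define p where "p = 3/2 * c - y"
        have pos: "0 < p" using y unfolding p_def by simp
        have "5/4 * c^2 = (5/4 * c^2 / p) * p" using pos by simp
        also have "\<dots> \<le> T * p" using h pos unfolding p_def[symmetric] by (intro mult_right_mono) auto
        finally show ?thesis unfolding p_def .
      qed
      then have "y \<le> 1 / T * (3/2 * c * T - 5/4 * c^2)" using T by (simp add: field_simps)
      then have "ennreal y \<le> ennreal (1 / T * (3/2 * c * T - 5/4 * c^2))" by (rule ennreal_leI)
      also have "\<dots> = ennreal (1 / T) * ennreal (3/2 * c * T - 5/4 * c^2)"
        using T by (intro ennreal_mult') simp
      also have "\<dots> \<le> ennreal (1 / T) * expected_area db t tb T"
        using area_A[OF F d db, of T] T unfolding c_def by (intro mult_left_mono) auto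
      finally show "ennreal y \<le> ennreal (1 / T) * expected_area db t tb T" .
    qed
  qed
  have B: "ennreal (1/2 + c) \<le> avg_age db t tb"
    unfolding avg_age_def
  proof (rule limsup_lb)
    fix y assume y: "y < 1/2 + c"
    define g where "g = c + 1/2 - y"
    have g: "0 < g" using y unfolding g_def by simp
    define e where "e = min (1/2) (g / 2)"
    have e: "0 < e" "e < 1" "e \<le> g / 2" using g unfolding e_def by auto
    define K where "K = c^2 / (2 * e)"
    have K: "0 \<le> K" unfolding K_def using e by simp
    define C where "C = 3 + 1 / e"
    have C: "0 < C" unfolding C_def using e by (simp add: add_pos_pos)
    define N where "N = max 1 (2 * (K + C) / g)"
    show "eventually (\<lambda>T. ennreal y \<le> ennreal (1 / T) * expected_area db t tb T) at_top"
      unfolding eventually_at_top_linorder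
    proof (intro exI[of _ N] allI impI)
      fix T assume TN: "N \<le> T"
      then have T: "0 < T" unfolding N_def by simp
      have "2 * (K + C) / g \<le> T" using TN unfolding N_def by simp
      then have "2 * (K + C) \<le> T * g"
      proof -
        assume h: "2 * (K + C) / g \<le> T"
        have "2 * (K + C) = (2 * (K + C) / g) * g" using g by simp
        also have "\<dots> \<le> T * g" using h g by (intro mult_right_mono) auto
        finally show ?thesis .
      qed
      then have KC: "(K + C) / T \<le> g / 2" using T by (simp add: field_simps)
      have "y \<le> c + 1/2 - e - (K + C) / T" using KC e g_def by linarith
      also have "\<dots> \<le> 1 / T * (c * T - K + ((1 - e) / 2 * T^2) / ((1 + e) * T + C))"
        by (rule ineqB[OF e(1,2) C T K])
      finally have "ennreal y \<le> ennreal (1 / T * (c * T - K + ((1 - e) / 2 * T^2) / ((1 + e) * T + C)))"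
        by (rule ennreal_leI)
      also have "\<dots> = ennreal (1 / T) * ennreal (c * T - K + ((1 - e) / 2 * T^2) / ((1 + e) * T + C))"
        using T by (intro ennreal_mult') simp
      also have "\<dots> \<le> ennreal (1 / T) * expected_area db t tb T"
        using area_B[OF F d db T e(1,2)] unfolding c_def[symmetric] K_def C_def
        by (intro mult_left_mono) (auto simp: add_ac)
      finally show "ennreal y \<le> ennreal (1 / T) * expected_area db t tb T" .
    qed
  qed
  show ?thesis
  proof (cases "1/2 + d + db \<le> 3/2 * (d + db)")
    case True then show ?thesis using A unfolding c_def by (simp add: max_def)
  next
    case False then show ?thesis using B unfolding c_def by (simp add: max_def add_ac)
  qed
qed

theorem lemma7:
  fixes d db :: real
  assumes "0 < d" and "0 < db"
  shows "ennreal (max (1/2 + d + db) (3/2 * (d + db))) \<le> opt_age d db"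
  unfolding opt_age_def
proof (rule INF_greatest)
  fix p assume "p \<in> {(t, tb). feasible_policy d db t tb}"
  then obtain t tb where p: "p = (t, tb)" and F: "feasible_policy d db t tb" by auto
  show "ennreal (max (1/2 + d + db) (3/2 * (d + db))) \<le> (case p of (t, tb) \<Rightarrow> avg_age db t tb)"
    unfolding p using policy_bound[OF F assms] by simp
qed


end
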